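(* Let $N, N_{\tilde y}, M \in \mathbb{N}$, $X\in\mathbb{R}^{N\times M}$, $\tilde Y \in \mathbb{R}^{N_{\tilde y}\times M}$, $\lambda\ge0$, $\Omega=\{1,\dots,N\}$. Let $\tilde Y = U\Sigma V$ be a singular value decomposition with $U\in\mathbb{R}^{N_{\tilde y}\times N_{\tilde y}}$, $V\in\mathbb{R}^{M\times M}$ orthogonal and $\Sigma\in\mathbb{R}^{N_{\tilde y}\times M}$ having diagonal entries $\sigma_1(\tilde Y)\ge\sigma_2(\tilde Y)\ge\cdots$ and zeros elsewhere. For $r\le\operatorname{rank}\tilde Y$ let $Z = \Sigma_{1:r,1:r}V_{1:r}\in\mathbb{R}^{r\times M}$, where $V_{1:r}$ denotes the first $r$ rows of $V$. Then for any $S\subset\Omega$ with $X_SX_S^\top+\lambda I_{|S|}\succ0$ (or $S=\emptyset$), \[ 0 \le J_{\tilde Y}(S) - J_Z(S) \le \sum_{i=r+1}^{\operatorname{rank}\tilde Y}\sigma_i^2(\tilde Y). \]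
   Context: For a matrix $Y$ with $M$ columns and $S\subset\Omega$ with $X_SX_S^\top+\lambda I_{|S|}\succ0$, $J_Y(S) = \operatorname{tr}\{ Y X_S^\top (X_S X_S^\top + \lambda I_{|S|})^{-1} X_S Y^\top \}$, where $X_S$ is the submatrix of $X$ consisting of the rows indexed by $S$; $J_Y(\emptyset)=0$. *)

theory Defs
  imports "Jordan_Normal_Form.DL_Rank" "Jordan_Normal_Form.DL_Submatrix"
    "Jordan_Normal_Form.Gauss_Jordan_Elimination"
begin

text \<open>Matrices are Jordan_Normal_Form matrices; rows/columns are indexed from 0,
  so \<Omega> = {1..N} becomes {0..<N}.\<close>

definition rows_sub :: "real mat \<Rightarrow> nat set \<Rightarrow> real mat" where
  "rows_sub X S = submatrix X S {0..<dim_col X}"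

definition pos_def_mat :: "real mat \<Rightarrow> bool" where
  "pos_def_mat A \<longleftrightarrow> dim_row A = dim_col A \<and> transpose_mat A = A \<and>
     (\<forall>v \<in> carrier_vec (dim_row A). v \<noteq> 0\<^sub>v (dim_row A) \<longrightarrow> scalar_prod v (A *\<^sub>v v) > 0)"

definition gram_reg :: "real mat \<Rightarrow> real \<Rightarrow> nat set \<Rightarrow> real mat" where
  "gram_reg X lam S = rows_sub X S * transpose_mat (rows_sub X S)
      + lam \<cdot>\<^sub>m 1\<^sub>m (dim_row (rows_sub X S))"

definition mat_trace :: "real mat \<Rightarrow> real" where
  "mat_trace A = (\<Sum>i<dim_row A. A $$ (i, i))"

definition J :: "real mat \<Rightarrow> real mat \<Rightarrow> real \<Rightarrow> nat set \<Rightarrow> real" where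
  "J X Y lam S = (if S = {} then 0 else
     mat_trace (Y * transpose_mat (rows_sub X S) * the (mat_inverse (gram_reg X lam S))
            * rows_sub X S * transpose_mat Y))"

end

theory Submission imports Defs begin
lemma mat_trace_comm:
  fixes A B :: "real mat"
  assumes A: "A \<in> carrier_mat n m" and B: "B \<in> carrier_mat m n"
  shows "mat_trace (A * B) = mat_trace (B * A)"
proof -
  have "mat_trace (A * B) = (\<Sum>i<n. \<Sum>j<m. A $$ (i, j) * B $$ (j, i))"
    using A B by (simp add: mat_trace_def scalar_prod_def atLeast0LessThan)
  also have "\<dots> = (\<Sum>j<m. \<Sum>i<n. B $$ (j, i) * A $$ (i, j))"
    by (subst sum.swap) (simp add: mult.commute)
  also have "\<dots> = mat_trace (B * A)"
    using A B by (simp add: mat_trace_def scalar_prod_def atLeast0LessThan)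
  finally show ?thesis .
qed
lemma smult_one_mat_vec:
  fixes u :: "real vec"
  assumes u: "u \<in> carrier_vec k"
  shows "(lam \<cdot>\<^sub>m 1\<^sub>m k) *\<^sub>v u = lam \<cdot>\<^sub>v u"
proof -
  have "(lam \<cdot>\<^sub>m 1\<^sub>m k) *\<^sub>v u = (lam \<cdot>\<^sub>m 1\<^sub>m k) *\<^sub>v (1\<^sub>m k *\<^sub>v u)" using u by simp
  also have "\<dots> = lam \<cdot>\<^sub>v (1\<^sub>m k *\<^sub>v u)"
    by (rule eq_vecI) (use u in \<open>auto simp: scalar_prod_def sum_distrib_left if_distrib if_distribR cong: if_cong\<close>)
  finally show ?thesis using u by simp
qed

lemma trace_quad:
  fixes Y P :: "real mat"
  assumes Y: "Y \<in> carrier_mat n m" and P: "P \<in> carrier_mat m m"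
  shows "mat_trace (Y * P * transpose_mat Y) = (\<Sum>i<n. row Y i \<bullet> (P *\<^sub>v row Y i))"
proof -
  have e: "Y * P * transpose_mat Y = Y * (P * transpose_mat Y)"
    using Y P by (intro assoc_mult_mat) auto
  show ?thesis unfolding e mat_trace_def
  proof (intro sum.cong)
    fix i assume "i \<in> {..<n}"
    then have i: "i < n" by simp
    have "(Y * (P * transpose_mat Y)) $$ (i, i) = row Y i \<bullet> col (P * transpose_mat Y) i"
      using Y P i by (intro index_mult_mat) auto
    also have "col (P * transpose_mat Y) i = P *\<^sub>v col (transpose_mat Y) i"
      using Y P i by (intro col_mult2) auto
    also have "col (transpose_mat Y) i = row Y i" using Y i by simp
    finally show "(Y * (P * transpose_mat Y)) $$ (i, i) = row Y i \<bullet> (P *\<^sub>v row Y i)" .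
  qed (use Y P in auto)
qed

lemma self_scalar_nonneg: "(v::real vec) \<bullet> v \<ge> 0"
  unfolding scalar_prod_def by (intro sum_nonneg) auto

lemma sq_expand:
  fixes v y :: "real vec"
  assumes "v \<in> carrier_vec m" "y \<in> carrier_vec m"
  shows "v \<bullet> v - 2 * (v \<bullet> y) + y \<bullet> y \<ge> 0"
proof -
  have "v \<bullet> v - 2 * (v \<bullet> y) + y \<bullet> y = (\<Sum>i\<in>{0..<m}. (v $ i - y $ i)^2)"
    using assms unfolding scalar_prod_def
    by (simp add: sum_subtractf sum.distrib sum_distrib_left power2_eq_square algebra_simps)
  also have "\<dots> \<ge> 0" by (intro sum_nonneg) auto
  finally show ?thesis .
qed

lemma quad_bound:
  fixes A B :: "real mat" and lam :: real
  assumes A: "A \<in> carrier_mat k m" and B: "B \<in> carrier_mat k k"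
    and GB: "(A * transpose_mat A + lam \<cdot>\<^sub>m 1\<^sub>m k) * B = 1\<^sub>m k"
    and lam: "lam \<ge> 0" and v: "v \<in> carrier_vec m"
  shows "0 \<le> v \<bullet> ((transpose_mat A * B * A) *\<^sub>v v) \<and> v \<bullet> ((transpose_mat A * B * A) *\<^sub>v v) \<le> v \<bullet> v"
proof -
  define w where "w = A *\<^sub>v v"
  define u where "u = B *\<^sub>v w"
  define y where "y = transpose_mat A *\<^sub>v u"
  have w: "w \<in> carrier_vec k" using A v w_def by auto
  have u: "u \<in> carrier_vec k" using B w u_def by auto
  have y: "y \<in> carrier_vec m" using A u y_def by auto
  have Py: "(transpose_mat A * B * A) *\<^sub>v v = y"
  proof -
    have "(transpose_mat A * B * A) *\<^sub>v v = (transpose_mat A * B) *\<^sub>v (A *\<^sub>v v)"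
      using A B v by (intro assoc_mult_mat_vec) auto
    also have "\<dots> = transpose_mat A *\<^sub>v (B *\<^sub>v (A *\<^sub>v v))"
      using A B v by (intro assoc_mult_mat_vec) auto
    finally show ?thesis unfolding y_def u_def w_def .
  qed
  have a1: "v \<bullet> y = w \<bullet> u"
  proof -
    have "(transpose_mat A *\<^sub>v u) \<bullet> v = u \<bullet> (A *\<^sub>v v)"
      by (rule transpose_vec_mult_scalar[OF A v u])
    then show ?thesis unfolding y_def w_def
      using comm_scalar_prod[OF v, of "transpose_mat A *\<^sub>v u"] comm_scalar_prod[OF u, of "A *\<^sub>v v"] A v u
      by auto
  qed
  have wG: "w = (A * transpose_mat A + lam \<cdot>\<^sub>m 1\<^sub>m k) *\<^sub>v u"
  proof -
    have "(A * transpose_mat A + lam \<cdot>\<^sub>m 1\<^sub>m k) *\<^sub>v u = ((A * transpose_mat A + lam \<cdot>\<^sub>m 1\<^sub>m k) * B) *\<^sub>v w"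
      unfolding u_def using A B w by (subst assoc_mult_mat_vec[of _ k k]) auto
    then show ?thesis using GB w by simp
  qed
  have wG2: "w = A *\<^sub>v y + lam \<cdot>\<^sub>v u"
    unfolding wG y_def using A u
    by (simp add: add_mult_distrib_mat_vec[of _ k k] assoc_mult_mat_vec[of _ k m _ k] smult_one_mat_vec)
  have a2: "w \<bullet> u = y \<bullet> y + lam * (u \<bullet> u)"
  proof -
    have "w \<bullet> u = (A *\<^sub>v y) \<bullet> u + (lam \<cdot>\<^sub>v u) \<bullet> u"
      unfolding wG2 using A y u by (simp add: add_scalar_prod_distrib[of _ k])
    moreover have "(A *\<^sub>v y) \<bullet> u = y \<bullet> y"
    proof -
      have "(A *\<^sub>v y) \<bullet> u = u \<bullet> (A *\<^sub>v y)" using comm_scalar_prod[of "A *\<^sub>v y" k u] A y u by auto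
      also have "\<dots> = (transpose_mat A *\<^sub>v u) \<bullet> y" by (rule transpose_vec_mult_scalar[OF A y u, symmetric])
      finally show ?thesis unfolding y_def .
    qed
    ultimately show ?thesis using u by simp
  qed
  have uu: "u \<bullet> u \<ge> 0" by (rule self_scalar_nonneg)
  have yy: "y \<bullet> y \<ge> 0" by (rule self_scalar_nonneg)
  have sq: "v \<bullet> v - 2 * (v \<bullet> y) + y \<bullet> y \<ge> 0" by (rule sq_expand[OF v y])
  have "lam * (u \<bullet> u) \<ge> 0" using lam uu by simp
  then show ?thesis unfolding Py using a1 a2 sq yy by linarith
qed


lemma (in vec_space) rank_mult_le:
  assumes A: "A \<in> carrier_mat n nc" and B: "B \<in> carrier_mat nc p"
  shows "rank (A * B) \<le> rank A"
proof -
  define W where "W = span (set (cols A))"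
  have colsA: "set (cols A) \<subseteq> carrier_vec n" using A cols_dim by blast
  have sub: "set (cols (A * B)) \<subseteq> W"
  proof
    fix x assume "x \<in> set (cols (A * B))"
    then obtain j where j: "j < p" "x = col (A * B) j"
      using A B by (auto simp: in_set_conv_nth)
    then have x: "x = A *\<^sub>v col B j" using A B by auto
    have cB: "col B j \<in> carrier_vec nc" using B j by auto
    have "lincomb_list (\<lambda>i. col B j $ i) (cols A) = mat_of_cols n (cols A) *\<^sub>v vec (length (cols A)) (\<lambda>i. col B j $ i)"
      using colsA by (intro lincomb_list_as_mat_mult) auto
    also have "vec (length (cols A)) (\<lambda>i. col B j $ i) = col B j"
      using A B by (intro eq_vecI) auto
    then have "mat_of_cols n (cols A) *\<^sub>v vec (length (cols A)) (\<lambda>i. col B j $ i) = A *\<^sub>v col B j"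
      using A mat_of_cols_cols[of A] by simp
    finally have "x \<in> span_list (cols A)" unfolding x by (intro in_span_listI[where c="\<lambda>i. col B j $ i"]) auto
    then show "x \<in> W" unfolding W_def using span_list_as_span[OF colsA] by simp
  qed
  have "VectorSpace.subspace class_ring W V" unfolding W_def using colsA span_is_subspace by auto
  then have "span (set (cols (A * B))) \<subseteq> W"
    using sub by (simp add: span_is_subset)
  have ABc: "A * B \<in> carrier_mat n p" using A B by auto
  have "VectorSpace.subspace class_ring (span (set (cols (A * B)))) V"
    by (metis ABc cols_dim carrier_matD(1) span_is_subspace)
  then have subspace: "VectorSpace.subspace class_ring (span (set (cols (A * B)))) (vs W)"
    using nested_subspaces[OF \<open>VectorSpace.subspace class_ring W V\<close>] \<open>span (set (cols (A * B))) \<subseteq> W\<close> by blast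
  have fin_dim: "vectorspace.fin_dim class_ring (vs W)" unfolding W_def using A fin_dim_span_cols by blast
  have "vectorspace.fin_dim class_ring (span_vs (set (cols (A * B))))" using ABc fin_dim_span_cols by blast
  then show ?thesis unfolding rank_def W_def[symmetric]
    using vectorspace.subspace_dim[OF subspace_is_vs[OF \<open>VectorSpace.subspace class_ring W V\<close>] subspace fin_dim] by auto
qed

lemma (in vec_space) rank_le_nr:
  assumes A: "A \<in> carrier_mat n nc"
  shows "rank A \<le> n"
proof -
  have colsA: "set (cols A) \<subseteq> carrier_vec n" using A cols_dim by blast
  have s: "VectorSpace.subspace class_ring (span (set (cols A))) V" using colsA span_is_subspace by auto
  have "vectorspace.fin_dim class_ring (span_vs (set (cols A)))" using A fin_dim_span_cols by blast
  then have "rank A \<le> dim" unfolding rank_def using subspace_dim[OF s fin_dim] by auto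
  then show ?thesis using dim_is_n by simp
qed


lemma (in vec_space) rank_diag_lower:
  assumes U: "U \<in> carrier_mat n n" "transpose_mat U * U = 1\<^sub>m n"
    and D: "D \<in> carrier_mat n p" "\<And>a b. a < n \<Longrightarrow> b < p \<Longrightarrow> a \<noteq> b \<Longrightarrow> D $$ (a,b) = 0"
      "\<And>a. a < p \<Longrightarrow> D $$ (a,a) \<noteq> 0"
    and p: "p \<le> n"
  shows "p \<le> rank (U * D)"
proof -
  define C where "C = U * D"
  have Cc: "C \<in> carrier_mat n p" using U D unfolding C_def by auto
  have UC: "transpose_mat U * C = D"
  proof -
    have "transpose_mat U * C = (transpose_mat U * U) * D"
      unfolding C_def using U D by (intro assoc_mult_mat[symmetric]) auto
    then show ?thesis using U D by simp
  qed
  have colD: "col D a = transpose_mat U *\<^sub>v col C a" if "a < p" for a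
    using UC Cc U that col_mult2[of "transpose_mat U" n n C p a] by auto
  have dist: "distinct (cols C)"
  proof (subst distinct_conv_nth, intro allI impI)
    fix a b assume a: "a < length (cols C)" and b: "b < length (cols C)" and ab: "a \<noteq> b"
    have a': "a < p" and b': "b < p" using a b Cc by auto
    show "cols C ! a \<noteq> cols C ! b"
    proof
      assume "cols C ! a = cols C ! b"
      then have "col C a = col C b" using a b by simp
      then have "col D a = col D b" using colD a' b' by simp
      then have "col D a $ a = col D b $ a" by simp
      then have "D $$ (a,a) = D $$ (a,b)" using a' b' D(1) p by simp
      then show False using D(2)[of a b] D(3)[of a] a' b' p ab by simp
    qed
  qed
  have indep: "lin_indpt (set (cols C))"
  proof
    assume "lin_dep (set (cols C))"
    then obtain v where v: "v \<in> carrier_vec p" "v \<noteq> 0\<^sub>v p" "C *\<^sub>v v = 0\<^sub>v n"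
      using lin_depE[OF Cc _ dist] by blast
    have Dv: "D *\<^sub>v v = 0\<^sub>v n"
    proof -
      have "D *\<^sub>v v = transpose_mat U *\<^sub>v (C *\<^sub>v v)"
        unfolding UC[symmetric] using U Cc v by (intro assoc_mult_mat_vec) auto
      then show ?thesis using v U by (auto intro!: eq_vecI simp: scalar_prod_def)
    qed
    have "v = 0\<^sub>v p"
    proof (rule eq_vecI)
      fix a assume "a < dim_vec (0\<^sub>v p)"
      then have a: "a < p" by simp
      have "(D *\<^sub>v v) $ a = (\<Sum>b\<in>{0..<p}. D $$ (a,b) * v $ b)"
        using D(1) v a p by (simp add: scalar_prod_def)
      also have "\<dots> = (\<Sum>b\<in>{0..<p}. if b = a then D $$ (a,a) * v $ a else 0)"
        by (rule sum.cong) (use D(2) a p in auto)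
      also have "\<dots> = D $$ (a,a) * v $ a" using a by simp
      finally have "D $$ (a,a) * v $ a = 0" using Dv a p by simp
      then show "v $ a = 0\<^sub>v p $ a" using D(3)[OF a] a by simp
    qed (use v in auto)
    then show False using v by simp
  qed
  have "card (set (cols C)) \<le> rank C" by (rule rank_ge_card_indpt[OF Cc subset_refl indep])
  moreover have "card (set (cols C)) = p" using distinct_card[OF dist] Cc by simp
  ultimately show ?thesis unfolding C_def by simp
qed


lemma trace_orth:
  fixes U W P :: "real mat"
  assumes U: "U \<in> carrier_mat n n" "transpose_mat U * U = 1\<^sub>m n"
    and W: "W \<in> carrier_mat n m" and P: "P \<in> carrier_mat m m"
  shows "mat_trace (U * W * P * transpose_mat (U * W)) = mat_trace (W * P * transpose_mat W)"
proof -
  define Q where "Q = W * P * transpose_mat W"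
  have Q: "Q \<in> carrier_mat n n" unfolding Q_def using W P by auto
  have Ut: "transpose_mat U \<in> carrier_mat n n" using U by auto
  have Wt: "transpose_mat W \<in> carrier_mat m n" using W by auto
  have WP: "W * P \<in> carrier_mat n m" using W P by auto
  have e1: "U * W * P = U * (W * P)" by (rule assoc_mult_mat[OF U(1) W P])
  have e2: "transpose_mat (U * W) = transpose_mat W * transpose_mat U" by (rule transpose_mult[OF U(1) W])
  have e3: "U * (W * P) * (transpose_mat W * transpose_mat U) = U * ((W * P) * (transpose_mat W * transpose_mat U))"
    by (rule assoc_mult_mat[OF U(1) WP]) (use Wt Ut in auto)
  have e4: "(W * P) * (transpose_mat W * transpose_mat U) = Q * transpose_mat U"
    unfolding Q_def by (rule assoc_mult_mat[OF WP Wt Ut, symmetric])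
  have "mat_trace (U * W * P * transpose_mat (U * W)) = mat_trace (U * (Q * transpose_mat U))"
    unfolding e1 e2 e3 e4 ..
  also have "\<dots> = mat_trace ((Q * transpose_mat U) * U)"
    by (rule mat_trace_comm[OF U(1)]) (use Q Ut in auto)
  also have "(Q * transpose_mat U) * U = Q * (transpose_mat U * U)"
    by (rule assoc_mult_mat[OF Q Ut U(1)])
  also have "\<dots> = Q" using U Q by simp
  finally show ?thesis unfolding Q_def .
qed

lemma sum_if_less_min:
  fixes f :: "nat \<Rightarrow> real"
  shows "(\<Sum>i<a. if i < b then f i else 0) = (\<Sum>i<min a b. f i)"
proof -
  have "(\<Sum>i<a. if i < b then f i else 0) = sum f {i \<in> {..<a}. i < b}"
    by (rule sum.inter_filter[symmetric]) auto
  also have "{i \<in> {..<a}. i < b} = {..<min a b}" by auto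
  finally show ?thesis .
qed

theorem lemma4:
  fixes N Ny M r :: nat and X Yt U Sig V :: "real mat" and lam :: real and S :: "nat set"
  assumes X: "X \<in> carrier_mat N M"
    and Yt: "Yt \<in> carrier_mat Ny M"
    and lam: "lam \<ge> 0"
    and U: "U \<in> carrier_mat Ny Ny" "transpose_mat U * U = 1\<^sub>m Ny" "U * transpose_mat U = 1\<^sub>m Ny"
    and V: "V \<in> carrier_mat M M" "transpose_mat V * V = 1\<^sub>m M" "V * transpose_mat V = 1\<^sub>m M"
    and Sig: "Sig \<in> carrier_mat Ny M"
      "\<And>i j. i < Ny \<Longrightarrow> j < M \<Longrightarrow> i \<noteq> j \<Longrightarrow> Sig $$ (i, j) = 0"
      "\<And>i. i < min Ny M \<Longrightarrow> Sig $$ (i, i) \<ge> 0"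
      "\<And>i j. i \<le> j \<Longrightarrow> j < min Ny M \<Longrightarrow> Sig $$ (j, j) \<le> Sig $$ (i, i)"
    and svd: "Yt = U * Sig * V"
    and r: "r \<le> vec_space.rank Ny Yt"
    and S: "S \<subseteq> {0..<N}"
    and pd: "S = {} \<or> pos_def_mat (gram_reg X lam S)"
  shows "0 \<le> J X Yt lam S - J X (mat r M (\<lambda>(i, j). Sig $$ (i, i) * V $$ (i, j))) lam S
       \<and> J X Yt lam S - J X (mat r M (\<lambda>(i, j). Sig $$ (i, i) * V $$ (i, j))) lam S
           \<le> (\<Sum>i\<in>{r..<vec_space.rank Ny Yt}. (Sig $$ (i, i))\<^sup>2)"
proof -
  define R where "R = vec_space.rank Ny Yt"
  define L where "L = min Ny M"
  define Z where "Z = mat r M (\<lambda>(i, j). Sig $$ (i, i) * V $$ (i, j))"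
  have RM: "R \<le> M" unfolding R_def by (rule vec_space.rank_le_nc[OF Yt])
  have RN: "R \<le> Ny" unfolding R_def by (rule vec_space.rank_le_nr[OF Yt])
  have rL: "r \<le> R" "R \<le> L" using r RM RN unfolding R_def L_def by auto
  have sig0: "Sig $$ (i, i) = 0" if i: "R \<le> i" "i < L" for i
  proof (rule ccontr)
    assume nz: "Sig $$ (i, i) \<noteq> 0"
    define p where "p = Suc i"
    define E :: "real mat" where "E = mat M p (\<lambda>(a, b). if a = b then 1 else 0)"
    define D where "D = Sig * E"
    have pL: "p \<le> L" using i unfolding p_def by simp
    have Ec: "E \<in> carrier_mat M p" unfolding E_def by simp
    have Dc: "D \<in> carrier_mat Ny p" unfolding D_def using Sig Ec by auto
    have Dent: "D $$ (a, b) = Sig $$ (a, b)" if ab: "a < Ny" "b < p" for a b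
    proof -
      have "D $$ (a, b) = (\<Sum>t\<in>{0..<M}. Sig $$ (a, t) * E $$ (t, b))"
        unfolding D_def using Sig Ec ab by (simp add: scalar_prod_def)
      also have "\<dots> = (\<Sum>t\<in>{0..<M}. if t = b then Sig $$ (a, b) else 0)"
        by (rule sum.cong) (use ab in \<open>auto simp: E_def\<close>)
      also have "\<dots> = Sig $$ (a, b)" using ab pL unfolding L_def by simp
      finally show ?thesis .
    qed
    have sigpos: "Sig $$ (a, a) > 0" if a: "a < p" for a
    proof -
      have "Sig $$ (i, i) \<ge> 0" using Sig(3) i unfolding L_def by simp
      then have "Sig $$ (i, i) > 0" using nz by simp
      moreover have "Sig $$ (i, i) \<le> Sig $$ (a, a)" using Sig(4)[of a i] a i unfolding p_def L_def by simp
      ultimately show ?thesis by simp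
    qed
    have "p \<le> vec_space.rank Ny (U * D)"
    proof (rule vec_space.rank_diag_lower[OF U(1,2) Dc])
      show "D $$ (a, b) = 0" if "a < Ny" "b < p" "a \<noteq> b" for a b
        using Dent[OF that(1,2)] Sig(2)[of a b] that pL unfolding L_def by simp
      show "D $$ (a, a) \<noteq> 0" if "a < p" for a
        using Dent[of a a] sigpos[OF that] that pL unfolding L_def by simp
      show "p \<le> Ny" using pL unfolding L_def by simp
    qed
    moreover have "U * D = Yt * (transpose_mat V * E)"
    proof -
      have Vt: "transpose_mat V \<in> carrier_mat M M" using V by auto
      have "Yt * (transpose_mat V * E) = U * Sig * V * (transpose_mat V * E)" using svd by simp
      also have "\<dots> = U * Sig * (V * (transpose_mat V * E))"
        by (rule assoc_mult_mat) (use U Sig V Vt Ec in auto)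
      also have "V * (transpose_mat V * E) = (V * transpose_mat V) * E"
        by (rule assoc_mult_mat[symmetric]) (use V Vt Ec in auto)
      also have "\<dots> = E" using V Ec by simp
      also have "U * Sig * E = U * D" unfolding D_def
        by (rule assoc_mult_mat) (use U Sig Ec in auto)
      finally show ?thesis by simp
    qed
    moreover have "vec_space.rank Ny (Yt * (transpose_mat V * E)) \<le> R"
      unfolding R_def by (rule vec_space.rank_mult_le[OF Yt]) (use V Ec in auto)
    ultimately show False using i unfolding p_def by simp
  qed
  show ?thesis
  proof (cases "S = {}")
    case True
    then show ?thesis unfolding J_def R_def[symmetric] by (auto intro: sum_nonneg)
  next
    case False
    then have pdG: "pos_def_mat (gram_reg X lam S)" using pd by simp
    define k where "k = card S"
    define A where "A = rows_sub X S"
    have Ac: "A \<in> carrier_mat k M"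
    proof -
      have "{i. i < dim_row X \<and> i \<in> S} = S" using X S by auto
      moreover have "{j. j < dim_col X \<and> j \<in> {0..<dim_col X}} = {0..<M}" using X by auto
      ultimately have "dim_row A = k" "dim_col A = M"
        unfolding A_def rows_sub_def k_def dim_submatrix by (simp_all add: X[unfolded carrier_mat_def])
      then show ?thesis by auto
    qed
    define G where "G = A * transpose_mat A + lam \<cdot>\<^sub>m 1\<^sub>m k"
    have GG: "gram_reg X lam S = G" unfolding gram_reg_def G_def A_def[symmetric] using Ac by simp
    have Gc: "G \<in> carrier_mat k k" unfolding G_def using Ac by auto
    have detG: "det G \<noteq> 0"
    proof
      assume "det G = 0"
      then obtain v where v: "v \<in> carrier_vec k" "v \<noteq> 0\<^sub>v k" "G *\<^sub>v v = 0\<^sub>v k"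
        using det_0_iff_vec_prod_zero_field[OF Gc] by blast
      have "v \<bullet> (G *\<^sub>v v) > 0" using pdG v Gc unfolding GG pos_def_mat_def by auto
      then show False using v by simp
    qed
    obtain B where B: "mat_inverse G = Some B"
    proof (cases "mat_inverse G")
      case None
      have "G \<in> Units (ring_mat TYPE(real) k ())" by (rule det_non_zero_imp_unit[OF Gc detG])
      then show ?thesis using mat_inverse(1)[OF Gc None, where b="()"] by simp
    qed
    have Bp: "G * B = 1\<^sub>m k" "B \<in> carrier_mat k k" using mat_inverse(2)[OF Gc B] by auto
    define P where "P = transpose_mat A * B * A"
    have Pc: "P \<in> carrier_mat M M" unfolding P_def using Ac Bp by auto
    have JY: "J X Y lam S = mat_trace (Y * P * transpose_mat Y)" if Y: "Y \<in> carrier_mat n M" for Y n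
    proof -
      have At: "transpose_mat A \<in> carrier_mat M k" using Ac by auto
      have "Y * transpose_mat A * B = Y * (transpose_mat A * B)"
        by (rule assoc_mult_mat[OF Y At Bp(2)])
      then have "Y * transpose_mat A * B * A = Y * (transpose_mat A * B) * A" by simp
      also have "\<dots> = Y * P" unfolding P_def
        by (rule assoc_mult_mat[OF Y]) (use At Bp Ac in auto)
      finally show ?thesis unfolding J_def using False B GG A_def by simp
    qed
    define q where "q i = row V i \<bullet> (P *\<^sub>v row V i)" for i
    have Qsc: "(c \<cdot>\<^sub>v v) \<bullet> (P *\<^sub>v (c \<cdot>\<^sub>v v)) = c^2 * (v \<bullet> (P *\<^sub>v v))" if v: "v \<in> carrier_vec M" for c v
    proof -
      have "P *\<^sub>v (c \<cdot>\<^sub>v v) = c \<cdot>\<^sub>v (P *\<^sub>v v)" by (rule mult_mat_vec[OF Pc v])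
      then show ?thesis using v Pc by (simp add: power2_eq_square)
    qed
    have qb: "0 \<le> q i \<and> q i \<le> 1" if i: "i < M" for i
    proof -
      have rv: "row V i \<in> carrier_vec M" using V i by auto
      have "(V * transpose_mat V) $$ (i, i) = row V i \<bullet> col (transpose_mat V) i"
        using V i by (intro index_mult_mat) auto
      also have "col (transpose_mat V) i = row V i" using V i by simp
      finally have one: "row V i \<bullet> row V i = 1" using V(3) i by simp
      show ?thesis using quad_bound[OF Ac Bp(2) Bp(1)[unfolded G_def] lam rv] one
        unfolding q_def P_def by simp
    qed
    have Zc: "Z \<in> carrier_mat r M" unfolding Z_def by simp
    have rM: "r \<le> M" using rL RM by simp
    have JZ: "J X Z lam S = (\<Sum>i<r. (Sig $$ (i, i))^2 * q i)"
    proof -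
      have "J X Z lam S = (\<Sum>i<r. row Z i \<bullet> (P *\<^sub>v row Z i))"
        unfolding JY[OF Zc] by (rule trace_quad[OF Zc Pc])
      also have "\<dots> = (\<Sum>i<r. (Sig $$ (i, i))^2 * q i)"
      proof (rule sum.cong)
        fix i assume "i \<in> {..<r}"
        then have i: "i < r" by simp
        have "row Z i = Sig $$ (i, i) \<cdot>\<^sub>v row V i"
          using i rM V unfolding Z_def by (intro eq_vecI) auto
        then show "row Z i \<bullet> (P *\<^sub>v row Z i) = (Sig $$ (i, i))^2 * q i"
        proof -
          have rv: "row V i \<in> carrier_vec M" using V i rM by auto
          show ?thesis unfolding q_def \<open>row Z i = _\<close> by (rule Qsc[OF rv])
        qed
      qed simp
      finally show ?thesis .
    qed
    define W where "W = Sig * V"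
    have Wc: "W \<in> carrier_mat Ny M" unfolding W_def using Sig V by auto
    have YW: "Yt = U * W" unfolding svd W_def by (rule assoc_mult_mat) (use U Sig V in auto)
    have rowW: "row W i = (if i < M then Sig $$ (i, i) \<cdot>\<^sub>v row V i else 0\<^sub>v M)" if i: "i < Ny" for i
    proof (rule eq_vecI)
      fix j assume "j < dim_vec (if i < M then Sig $$ (i, i) \<cdot>\<^sub>v row V i else 0\<^sub>v M)"
      then have j: "j < M" using V by (auto split: if_splits)
      have "row W i $ j = (\<Sum>t\<in>{0..<M}. Sig $$ (i, t) * V $$ (t, j))"
        unfolding W_def using Sig V i j by (simp add: scalar_prod_def)
      also have "\<dots> = (\<Sum>t\<in>{0..<M}. if t = i then Sig $$ (i, i) * V $$ (i, j) else 0)"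
        by (rule sum.cong) (use Sig(2) i in auto)
      also have "\<dots> = (if i < M then Sig $$ (i, i) * V $$ (i, j) else 0)" by simp
      finally show "row W i $ j = (if i < M then Sig $$ (i, i) \<cdot>\<^sub>v row V i else 0\<^sub>v M) $ j"
        using j V by auto
    qed (use Wc V in auto)
    have JYt: "J X Yt lam S = (\<Sum>i<L. (Sig $$ (i, i))^2 * q i)"
    proof -
      have "J X Yt lam S = mat_trace (Yt * P * transpose_mat Yt)" by (rule JY[OF Yt])
      also have "\<dots> = mat_trace (W * P * transpose_mat W)"
        unfolding YW by (rule trace_orth[OF U(1,2) Wc Pc])
      also have "\<dots> = (\<Sum>i<Ny. row W i \<bullet> (P *\<^sub>v row W i))" by (rule trace_quad[OF Wc Pc])
      also have "\<dots> = (\<Sum>i<Ny. if i < M then (Sig $$ (i, i))^2 * q i else 0)"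
      proof (rule sum.cong)
        fix i assume "i \<in> {..<Ny}"
        then have i: "i < Ny" by simp
        show "row W i \<bullet> (P *\<^sub>v row W i) = (if i < M then (Sig $$ (i, i))^2 * q i else 0)"
        proof (cases "i < M")
          case True
          have rv: "row V i \<in> carrier_vec M" using V True by auto
          show ?thesis unfolding rowW[OF i] q_def using True Qsc[OF rv] by simp
        next
          case False
          then show ?thesis unfolding rowW[OF i] using Pc by (simp add: scalar_prod_def)
        qed
      qed simp
      also have "\<dots> = (\<Sum>i<L. (Sig $$ (i, i))^2 * q i)" unfolding L_def by (rule sum_if_less_min)
      finally show ?thesis .
    qed
    define f where "f i = (Sig $$ (i, i))^2 * q i" for i
    have split: "(\<Sum>i<L. f i) = (\<Sum>i<r. f i) + (\<Sum>i\<in>{r..<L}. f i)"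
      using rL by (simp add: lessThan_atLeast0 sum.atLeastLessThan_concat)
    have diff: "J X Yt lam S - J X Z lam S = (\<Sum>i\<in>{r..<L}. f i)"
      unfolding JYt JZ f_def[symmetric] split by simp
    have "0 \<le> (\<Sum>i\<in>{r..<L}. f i)"
      unfolding f_def using qb by (intro sum_nonneg) (auto simp: L_def)
    moreover have "(\<Sum>i\<in>{r..<L}. f i) \<le> (\<Sum>i\<in>{r..<R}. (Sig $$ (i, i))^2)"
    proof -
      have "(\<Sum>i\<in>{r..<L}. f i) \<le> (\<Sum>i\<in>{r..<L}. (Sig $$ (i, i))^2)"
      proof (rule sum_mono)
        fix i assume "i \<in> {r..<L}"
        then have "q i \<le> 1" using qb unfolding L_def by auto
        then show "f i \<le> (Sig $$ (i, i))^2" unfolding f_def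
          by (metis mult_left_le mult.commute zero_le_power2)
      qed
      also have "\<dots> = (\<Sum>i\<in>{r..<R}. (Sig $$ (i, i))^2) + (\<Sum>i\<in>{R..<L}. (Sig $$ (i, i))^2)"
        using rL by (simp add: sum.atLeastLessThan_concat)
      also have "(\<Sum>i\<in>{R..<L}. (Sig $$ (i, i))^2) = 0"
        using sig0 by (intro sum.neutral) auto
      finally show ?thesis by simp
    qed
    ultimately show ?thesis unfolding diff[unfolded Z_def] R_def by simp
  qed
qed

end
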